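(* Let $N\ge1$ and $0<b_1<\cdots<b_N$. The set $\mathbf{S}$ of continuous functions $g:\mathbb{R}\to\mathbb{R}$ satisfying $g(w)+g(w+b_1)+\cdots+g(w+b_N)=0$ for all $w\in\mathbb{R}$ is an infinite-dimensional real vector space. Consequently, for any reals $1<a_1<\cdots<a_N$, the space of continuous functions $f:(0,\infty)\to\mathbb{R}$ satisfying $f(x)+f(a_1x)+\cdots+f(a_Nx)=0$ for all $x\in(0,\infty)$ is an infinite-dimensional real vector space. *)

theory Defs
  imports "HOL-Analysis.Analysis" "HOL-Library.Function_Algebras"
begin

definition fscale :: "real \<Rightarrow> ('a \<Rightarrow> real) \<Rightarrow> ('a \<Rightarrow> real)" where
  "fscale c f = (\<lambda>x. c * f x)"

definition inf_dim_fun_space :: "('a \<Rightarrow> real) set \<Rightarrow> bool" where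
  "inf_dim_fun_space S \<longleftrightarrow>
     module.subspace fscale S \<and>
     (\<exists>B. B \<subseteq> S \<and> infinite B \<and> \<not> module.dependent fscale B)"

definition S_add :: "nat \<Rightarrow> (nat \<Rightarrow> real) \<Rightarrow> (real \<Rightarrow> real) set" where
  "S_add N b = {g. continuous_on UNIV g \<and>
      (\<forall>w. g w + (\<Sum>i=1..N. g (w + b i)) = 0)}"

text \<open>Continuous f : (0,inf) -> R with f x + sum f (a_i x) = 0 for x > 0.
  Functions on (0,inf) are represented extensionally as real => real
  functions vanishing outside (0,inf).\<close>
definition S_mult :: "nat \<Rightarrow> (nat \<Rightarrow> real) \<Rightarrow> (real \<Rightarrow> real) set" where
  "S_mult N a = {f. continuous_on {0<..} f \<and> (\<forall>x. x \<le> 0 \<longrightarrow> f x = 0) \<and>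
      (\<forall>x>0. f x + (\<Sum>i=1..N. f (a i * x)) = 0)}"

end

theory Submission
  imports Defs
begin
lemma module_fscale: "module (fscale :: real \<Rightarrow> ('a \<Rightarrow> real) \<Rightarrow> ('a \<Rightarrow> real))"
  unfolding module_def fscale_def by (auto simp: fun_eq_iff algebra_simps)

lemma sum_fun_app: "(\<Sum>v\<in>t. (F v :: 'a \<Rightarrow> real)) x = (\<Sum>v\<in>t. F v x)"
  by (induction t rule: infinite_finite_induct) auto

lemma indep_family:
  fixes h :: "nat \<Rightarrow> ('a \<Rightarrow> real)" and p :: "nat \<Rightarrow> 'a"
  assumes z: "\<And>k l. k \<noteq> l \<Longrightarrow> h k (p l) = 0" and nz: "\<And>k. h k (p k) \<noteq> 0"
  shows "infinite (range h) \<and> \<not> module.dependent fscale (range h)"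
proof
  have "inj h"
  proof (rule injI)
    fix k l assume "h k = h l"
    show "k = l"
    proof (rule ccontr)
      assume "k \<noteq> l"
      then have "h l (p k) = 0" using z[of l k] by simp
      then show False using nz[of k] \<open>h k = h l\<close> by simp
    qed
  qed
  then show "infinite (range h)" using range_inj_infinite by blast
next
  show "\<not> module.dependent fscale (range h)"
  proof
    assume "module.dependent fscale (range h)"
    then obtain t u v where t: "finite t" "t \<subseteq> range h" "(\<Sum>v\<in>t. fscale (u v) v) = 0"
       and v: "v \<in> t" "u v \<noteq> 0"
      unfolding module.dependent_explicit[OF module_fscale] by auto
    obtain k where k: "v = h k" using t v by blast
    have "0 = (\<Sum>w\<in>t. fscale (u w) w) (p k)" using t(3) by (simp only: zero_fun_apply)
    also have "\<dots> = (\<Sum>w\<in>t. u w * w (p k))" by (simp add: sum_fun_app fscale_def)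
    also have "\<dots> = (\<Sum>w\<in>{v}. u w * w (p k))"
    proof (rule sum.mono_neutral_right)
      show "\<forall>i\<in>t - {v}. u i * i (p k) = 0"
      proof
        fix i assume i: "i \<in> t - {v}"
        then obtain l where "i = h l" using t by blast
        with i k have "l \<noteq> k" by auto
        then show "u i * i (p k) = 0" using z \<open>i = h l\<close> by simp
      qed
    qed (use t v in auto)
    also have "\<dots> = u v * h k (p k)" using k by simp
    finally show False using v nz by simp
  qed
qed

lemma sum_split_last:
  fixes N :: nat
  assumes "N \<ge> 1"
  shows "(\<Sum>i=1..N. f i) = (\<Sum>i=1..N-1. f i) + (f N :: real)"
proof -
  obtain M where M: "N = Suc M" using assms by (cases N) auto
  show ?thesis unfolding M by simp
qed

lemma exists_sol:
  fixes N :: nat and b :: "nat \<Rightarrow> real" and \<phi> :: "real \<Rightarrow> real"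
  assumes N: "N \<ge> 1" and b1: "0 < b 1" and sm: "strict_mono_on {1..N} b"
    and cphi: "continuous_on UNIV \<phi>" and cond: "\<phi> 0 + (\<Sum>i=1..N. \<phi> (b i)) = 0"
  shows "\<exists>g. g \<in> S_add N b \<and> (\<forall>x\<in>{0<..b N}. g x = \<phi> x)"
proof -
  define B where "B = b N"
  have mono: "b i \<le> b j" if "i \<in> {1..N}" "j \<in> {1..N}" "i \<le> j" for i j
  proof (cases "i = j")
    case False
    then have "i < j" using that by simp
    then show ?thesis using strict_mono_onD[OF sm that(1,2)] by simp
  qed simp
  define \<delta> where "\<delta> = (if N = 1 then b 1 else min (b 1) (B - b (N-1)))"
  have \<delta>pos: "\<delta> > 0"
  proof (cases "N = 1")
    case False
    then have "b (N-1) < b N" using N by (intro strict_mono_onD[OF sm]) auto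
    then show ?thesis using False b1 unfolding \<delta>_def B_def by simp
  qed (use b1 \<delta>_def in simp)
  have \<delta>1: "\<delta> \<le> b 1" unfolding \<delta>_def by simp
  have \<delta>b: "\<delta> \<le> b i" if "i \<in> {1..N}" for i
    using mono[of 1 i] that N \<delta>1 by auto
  have bB: "b i \<le> B" if "i \<in> {1..N}" for i
    using mono[of i N] that N unfolding B_def by auto
  have \<delta>B2: "b i + \<delta> \<le> B" if "i \<in> {1..N-1}" for i
  proof -
    have "N \<noteq> 1" using that by auto
    then have "\<delta> \<le> B - b (N-1)" unfolding \<delta>_def by simp
    moreover have "b i \<le> b (N-1)" using mono[of i "N-1"] that by auto
    ultimately show ?thesis by simp
  qed
  have bin: "b i \<in> {0..B}" if "i \<in> {1..N}" for i
    using \<delta>b[OF that] bB[OF that] \<delta>pos by auto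
  have \<delta>B: "\<delta> \<le> B" using \<delta>b[of N] N unfolding B_def by auto
  define Phi where "Phi u w = (if w \<le> 0 then - (\<Sum>i=1..N. u (w + b i))
      else if w \<le> B then \<phi> w else - u (w - B) - (\<Sum>i=1..N-1. u (w - B + b i)))"
    for u :: "real \<Rightarrow> real" and w
  define I where "I n = {- (real n * \<delta>) .. B + real n * \<delta>}" for n :: nat
  have loc: "Phi u w = Phi v w" if uv: "\<forall>x\<in>I n. u x = v x" and w: "w \<in> I (Suc n)" for u v n w
  proof -
    have nn: "0 \<le> \<delta> * real n" using \<delta>pos by simp
    consider "w \<le> 0" | "0 < w" "w \<le> B" | "B < w" by linarith
    then show ?thesis
    proof cases
      case 1
      have "w + b i \<in> I n" if "i \<in> {1..N}" for i
      proof -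
        have "- (real (Suc n) * \<delta>) \<le> w" using w unfolding I_def by auto
        then have "- (real n * \<delta>) \<le> w + b i" using \<delta>b[OF that] by (simp add: algebra_simps)
        moreover have "w + b i \<le> B + real n * \<delta>" using 1 bB[OF that] nn by (simp add: mult.commute)
        ultimately show ?thesis unfolding I_def by auto
      qed
      then have "(\<Sum>i=1..N. u (w + b i)) = (\<Sum>i=1..N. v (w + b i))"
        using uv by (intro sum.cong) auto
      then show ?thesis using 1 unfolding Phi_def by simp
    next
      case 2 then show ?thesis unfolding Phi_def by simp
    next
      case 3
      have wu: "w \<le> B + (real n * \<delta> + \<delta>)" using w unfolding I_def by (auto simp: algebra_simps)
      have nn': "0 \<le> real n * \<delta>" using nn by (simp add: mult.commute)
      have a: "w - B \<in> I n"
        using wu 3 \<delta>B nn' unfolding I_def by auto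
      have "w - B + b i \<in> I n" if "i \<in> {1..N-1}" for i
      proof -
        have "i \<in> {1..N}" using that by auto
        then show ?thesis
          using wu 3 \<delta>B2[OF that] \<delta>b[of i] nn' unfolding I_def by auto
      qed
      then have "(\<Sum>i=1..N-1. u (w - B + b i)) = (\<Sum>i=1..N-1. v (w - B + b i))"
        using uv by (intro sum.cong) auto
      moreover have "u (w - B) = v (w - B)" using uv a by auto
      moreover have "\<not> w \<le> 0" using 3 \<delta>B \<delta>pos by auto
      ultimately show ?thesis using 3 unfolding Phi_def by simp
    qed
  qed
  define G where "G n = (Phi ^^ n) \<phi>" for n
  have G_Suc: "G (Suc n) = Phi (G n)" for n unfolding G_def by simp
  have Phi_sm: "Phi u x = \<phi> x" if "\<forall>x\<in>{0..B}. u x = \<phi> x" "x \<in> {0..B}" for u x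
  proof (cases "x = 0")
    case True
    have "(\<Sum>i=1..N. u (0 + b i)) = (\<Sum>i=1..N. \<phi> (b i))"
      using that(1) bin by (intro sum.cong) auto
    then show ?thesis using True cond unfolding Phi_def by simp
  next
    case False then show ?thesis using that unfolding Phi_def by auto
  qed
  have stab1: "\<forall>x\<in>I n. G (Suc n) x = G n x" for n
  proof (induction n)
    case 0
    have "I 0 = {0..B}" unfolding I_def by simp
    then show ?case using Phi_sm[of \<phi>] unfolding G_def by simp
  next
    case (Suc n)
    show ?case
    proof
      fix x assume "x \<in> I (Suc n)"
      then show "G (Suc (Suc n)) x = G (Suc n) x"
        using loc[OF Suc.IH] unfolding G_Suc by simp
    qed
  qed
  have Imono: "I n \<subseteq> I m" if "n \<le> m" for n m
  proof -
    have "real n * \<delta> \<le> real m * \<delta>" using that \<delta>pos by (intro mult_right_mono) auto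
    then show ?thesis unfolding I_def by auto
  qed
  have stab: "\<forall>x\<in>I n. G m x = G n x" if "n \<le> m" for n m
    using that
  proof (induction m)
    case 0 then show ?case by simp
  next
    case (Suc m)
    show ?case
    proof (cases "n = Suc m")
      case False
      then have "n \<le> m" using Suc by simp
      then show ?thesis using Suc.IH stab1[of m] Imono[of n m] by auto
    qed simp
  qed
  define K where "K x = nat \<lceil>\<bar>x\<bar> / \<delta>\<rceil>" for x
  have inK: "x \<in> I (K x)" for x
  proof -
    have "\<bar>x\<bar> / \<delta> \<le> real (K x)" unfolding K_def by linarith
    then have "\<bar>x\<bar> \<le> real (K x) * \<delta>" using \<delta>pos by (simp add: field_simps)
    then show ?thesis using \<delta>B \<delta>pos unfolding I_def by auto
  qed
  define g where "g x = G (K x) x" for x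
  have gG: "g x = G n x" if "x \<in> I n" for x n
  proof (cases "K x \<le> n")
    case True then show ?thesis using stab[OF True] inK unfolding g_def by auto
  next
    case False then show ?thesis using stab[of n "K x"] that unfolding g_def by auto
  qed
  have fixp: "g x = Phi g x" for x
  proof -
    have x: "x \<in> I (Suc (K x))" using inK Imono[of "K x" "Suc (K x)"] by auto
    have "g x = G (Suc (K x)) x" using gG[OF x] .
    also have "\<dots> = Phi (G (K x)) x" unfolding G_Suc ..
    also have "\<dots> = Phi g x" using loc[OF _ x, of "G (K x)" g] gG by auto
    finally show ?thesis .
  qed
  have inv: "continuous_on UNIV (G n) \<and> (\<forall>x\<in>{0..B}. G n x = \<phi> x)" for n
  proof (induction n)
    case 0 then show ?case using cphi unfolding G_def by simp
  next
    case (Suc n)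
    let ?u = "G n"
    have cu: "continuous_on UNIV ?u" and eu: "\<forall>x\<in>{0..B}. ?u x = \<phi> x" using Suc by auto
    have ct: "continuous_on UNIV (\<lambda>w. ?u (w + c))" for c
      by (rule continuous_on_compose2[OF cu]) (auto intro!: continuous_intros)
    have cA: "continuous_on {..0} (\<lambda>w. - (\<Sum>i=1..N. ?u (w + b i)))"
      using ct by (auto intro!: continuous_intros intro: continuous_on_subset)
    have cC: "continuous_on {B..} (\<lambda>w. - ?u (w - B) - (\<Sum>i=1..N-1. ?u (w - B + b i)))"
    proof -
      have "continuous_on UNIV (\<lambda>w. ?u (w + (b i - B)))" for i using ct .
      then have "continuous_on UNIV (\<lambda>w. ?u (w - B + b i))" for i by (simp add: algebra_simps)
      moreover have "continuous_on UNIV (\<lambda>w. ?u (w + (- B)))" using ct .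
      ultimately show ?thesis
        by (auto intro!: continuous_intros intro: continuous_on_subset)
    qed
    have cphi': "continuous_on {0..B} \<phi>" using cphi continuous_on_subset by blast
    have eB: "\<phi> B = - ?u (B - B) - (\<Sum>i=1..N-1. ?u (B - B + b i))"
    proof -
      have "(\<Sum>i=1..N-1. ?u (B - B + b i)) = (\<Sum>i=1..N-1. \<phi> (b i))"
        using eu bin by (intro sum.cong) auto
      moreover have "?u (B - B) = \<phi> 0" using eu \<delta>B \<delta>pos by simp
      moreover have "\<phi> B = \<phi> (b N)" unfolding B_def ..
      ultimately show ?thesis using cond sum_split_last[OF N, of "\<lambda>i. \<phi> (b i)"] by simp
    qed
    have cin: "continuous_on ({0..B} \<union> {B..})
        (\<lambda>w. if w \<le> B then \<phi> w else - ?u (w - B) - (\<Sum>i=1..N-1. ?u (w - B + b i)))"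
      by (rule continuous_on_cases[OF _ _ cphi' cC]) (use eB in auto)
    have "{0..B} \<union> {B..} = {0::real..}" using \<delta>B \<delta>pos by auto
    then have cin': "continuous_on {0..}
        (\<lambda>w. if w \<le> B then \<phi> w else - ?u (w - B) - (\<Sum>i=1..N-1. ?u (w - B + b i)))"
      using cin by simp
    have e0: "- (\<Sum>i=1..N. ?u (0 + b i)) = \<phi> 0"
      using Phi_sm[OF eu, of 0] \<delta>B \<delta>pos unfolding Phi_def by simp
    have "continuous_on ({..0} \<union> {0..}) (\<lambda>w. if w \<le> 0 then - (\<Sum>i=1..N. ?u (w + b i))
      else if w \<le> B then \<phi> w else - ?u (w - B) - (\<Sum>i=1..N-1. ?u (w - B + b i)))"
      by (rule continuous_on_cases[OF _ _ cA cin']) (use e0 \<delta>B \<delta>pos in auto)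
    moreover have "{..0} \<union> {0..} = (UNIV :: real set)" by auto
    ultimately have "continuous_on UNIV (Phi ?u)" unfolding Phi_def by simp
    then show ?case using Phi_sm[OF eu] unfolding G_Suc by simp
  qed
  have cg: "continuous_on UNIV g"
  proof -
    have "isCont g x" for x
    proof -
      define n where "n = Suc (K x)"
      define Op where "Op = {- (real n * \<delta>) <..< B + real n * \<delta>}"
      have xO: "x \<in> Op"
      proof -
        have "- (real (K x) * \<delta>) \<le> x" "x \<le> B + real (K x) * \<delta>" using inK[of x] unfolding I_def by auto
        moreover have "real n * \<delta> = real (K x) * \<delta> + \<delta>" unfolding n_def by (simp add: algebra_simps)
        ultimately show ?thesis using \<delta>pos unfolding Op_def by auto
      qed
      have "Op \<subseteq> I n" unfolding Op_def I_def by auto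
      have c1: "continuous_on Op (G n)" using inv[of n] continuous_on_subset by blast
      have "continuous_on Op g"
      proof (rule continuous_on_cong[THEN iffD1, OF refl _ c1])
        fix y assume "y \<in> Op"
        then show "G n y = g y" using gG[of y n] \<open>Op \<subseteq> I n\<close> by auto
      qed
      moreover have "open Op" unfolding Op_def by simp
      ultimately show ?thesis using continuous_on_eq_continuous_at[of Op g] xO by blast
    qed
    then show ?thesis by (simp add: continuous_on_eq_continuous_at)
  qed
  have eq: "g w + (\<Sum>i=1..N. g (w + b i)) = 0" for w
  proof (cases "w \<le> 0")
    case True then show ?thesis using fixp[of w] unfolding Phi_def by simp
  next
    case False
    then have "Phi g (w + B) = - g (w + B - B) - (\<Sum>i=1..N-1. g (w + B - B + b i))"
      using \<delta>B \<delta>pos unfolding Phi_def by auto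
    then have "g (w + B) = - g w - (\<Sum>i=1..N-1. g (w + b i))"
      using fixp[of "w + B"] by simp
    then show ?thesis using sum_split_last[OF N, of "\<lambda>i. g (w + b i)"] unfolding B_def by simp
  qed
  have "g x = \<phi> x" if "x \<in> {0<..b N}" for x
  proof -
    have "Phi g x = \<phi> x" using that unfolding Phi_def B_def by auto
    then show ?thesis using fixp[of x] by simp
  qed
  then show ?thesis using cg eq unfolding S_add_def by blast
qed

lemma family_add:
  fixes N :: nat and b :: "nat \<Rightarrow> real"
  assumes N: "N \<ge> 1" and b1: "0 < b 1" and sm: "strict_mono_on {1..N} b"
  shows "\<exists>(g :: nat \<Rightarrow> real \<Rightarrow> real) c. (\<forall>k. g k \<in> S_add N b) \<and> (\<forall>k l. k \<noteq> l \<longrightarrow> g k (c l) = 0) \<and> (\<forall>k. g k (c k) \<noteq> 0)"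
proof -
  define lo where "lo k = b 1 / (real k + 2)" for k :: nat
  define hi where "hi k = b 1 / (real k + 1)" for k :: nat
  define c where "c k = (lo k + hi k) / 2" for k
  define r where "r k = (hi k - lo k) / 2" for k
  define \<phi> where "\<phi> k x = max 0 (r k - \<bar>x - c k\<bar>)" for k x
  have lo_pos: "0 < lo k" for k unfolding lo_def using b1 by simp
  have lo_hi: "lo k < hi k" for k unfolding lo_def hi_def using b1
    by (intro divide_strict_left_mono) auto
  have hi_b1: "hi k \<le> b 1" for k unfolding hi_def using b1
    by (simp add: divide_le_eq)
  have hl: "hi l \<le> lo k" if "k < l" for k l
  proof -
    have "real k + 2 \<le> real l + 1" using that by simp
    then show ?thesis unfolding lo_def hi_def using b1
      by (intro divide_left_mono) auto
  qed
  have \<phi>0: "\<phi> k x = 0" if "x \<le> lo k \<or> hi k \<le> x" for k x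
  proof -
    have "r k \<le> \<bar>x - c k\<bar>" using that lo_hi[of k] unfolding c_def r_def by (auto simp: abs_if field_simps)
    then show ?thesis unfolding \<phi>_def by simp
  qed
  have \<phi>c: "\<phi> k (c k) = r k" for k
    using lo_hi[of k] unfolding \<phi>_def r_def by simp
  have b_ge: "b 1 \<le> b i" if "i \<in> {1..N}" for i
  proof (cases "i = 1")
    case False
    then show ?thesis using strict_mono_onD[OF sm, of 1 i] that by auto
  qed simp
  have "\<exists>g. g \<in> S_add N b \<and> (\<forall>x\<in>{0<..b N}. g x = \<phi> k x)" for k
  proof (rule exists_sol[OF N b1 sm])
    show "continuous_on UNIV (\<phi> k)" unfolding \<phi>_def by (intro continuous_intros)
    have "\<phi> k 0 = 0" using lo_pos[of k] by (intro \<phi>0) simp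
    moreover have "(\<Sum>i=1..N. \<phi> k (b i)) = 0"
    proof (intro sum.neutral ballI)
      fix i assume "i \<in> {1..N}"
      then have "hi k \<le> b i" using hi_b1[of k] b_ge[of i] by linarith
      then show "\<phi> k (b i) = 0" by (intro \<phi>0) simp
    qed
    ultimately show "\<phi> k 0 + (\<Sum>i=1..N. \<phi> k (b i)) = 0" by simp
  qed
  then have ex: "\<forall>k. \<exists>g. g \<in> S_add N b \<and> (\<forall>x\<in>{0<..b N}. g x = \<phi> k x)" by blast
  obtain G where G0: "\<forall>k. G k \<in> S_add N b \<and> (\<forall>x\<in>{0<..b N}. G k x = \<phi> k x)"
    using choice[OF ex] by blast
  have G: "\<And>k. G k \<in> S_add N b" "\<And>k x. x \<in> {0<..b N} \<Longrightarrow> G k x = \<phi> k x"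
    using G0 by auto
  have cin: "c k \<in> {0<..b N}" for k
    using lo_pos[of k] lo_hi[of k] hi_b1[of k] b_ge[of N] N unfolding c_def by auto
  have "G k (c l) = 0" if "k \<noteq> l" for k l
  proof -
    have "G k (c l) = \<phi> k (c l)" using G(2) cin by blast
    also have "\<dots> = 0"
    proof (intro \<phi>0)
      show "c l \<le> lo k \<or> hi k \<le> c l"
      proof (cases "k < l")
        case True
        then show ?thesis using hl[OF True] lo_hi[of l] unfolding c_def by auto
      next
        case False
        then have "l < k" using that by simp
        then show ?thesis using hl[of l k] lo_hi[of l] unfolding c_def by auto
      qed
    qed
    finally show ?thesis .
  qed
  moreover have "G k (c k) \<noteq> 0" for k
  proof -
    have "G k (c k) = r k" using G(2)[OF cin] \<phi>c by simp
    then show ?thesis using lo_hi[of k] unfolding r_def by simp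
  qed
  ultimately have fin: "(\<forall>k. G k \<in> S_add N b) \<and> (\<forall>k l. k \<noteq> l \<longrightarrow> G k (c l) = 0) \<and> (\<forall>k. G k (c k) \<noteq> 0)"
    using G(1) by blast
  show ?thesis using fin by blast
qed

lemma subspace_add: "module.subspace fscale (S_add N b)"
  unfolding module.subspace_def[OF module_fscale]
proof (intro conjI ballI allI)
  show "0 \<in> S_add N b" unfolding S_add_def zero_fun_def by simp
next
  fix x y assume x: "x \<in> S_add N b" and y: "y \<in> S_add N b"
  have cx: "continuous_on UNIV x" and ex: "\<And>w. x w + (\<Sum>i=1..N. x (w + b i)) = 0"
    using x unfolding S_add_def by auto
  have cy: "continuous_on UNIV y" and ey: "\<And>w. y w + (\<Sum>i=1..N. y (w + b i)) = 0"
    using y unfolding S_add_def by auto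
  have "continuous_on UNIV (\<lambda>w. x w + y w)" using cx cy by (intro continuous_on_add)
  moreover have "(x w + y w) + (\<Sum>i=1..N. x (w + b i) + y (w + b i)) = 0" for w
    using ex[of w] ey[of w] by (simp add: sum.distrib)
  ultimately show "x + y \<in> S_add N b" unfolding S_add_def plus_fun_def by simp
next
  fix c x assume x: "x \<in> S_add N b"
  have cx: "continuous_on UNIV x" and ex: "\<And>w. x w + (\<Sum>i=1..N. x (w + b i)) = 0"
    using x unfolding S_add_def by auto
  have "continuous_on UNIV (\<lambda>w. c * x w)" using cx by (intro continuous_on_mult continuous_on_const)
  moreover have "c * x w + (\<Sum>i=1..N. c * x (w + b i)) = 0" for w
  proof -
    have "c * x w + (\<Sum>i=1..N. c * x (w + b i)) = c * (x w + (\<Sum>i=1..N. x (w + b i)))"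
      by (simp add: sum_distrib_left algebra_simps)
    then show ?thesis using ex[of w] by simp
  qed
  ultimately show "fscale c x \<in> S_add N b" unfolding S_add_def fscale_def by simp
qed

lemma subspace_mult: "module.subspace fscale (S_mult N a)"
  unfolding module.subspace_def[OF module_fscale]
proof (intro conjI ballI allI)
  show "0 \<in> S_mult N a" unfolding S_mult_def zero_fun_def by simp
next
  fix x y assume x: "x \<in> S_mult N a" and y: "y \<in> S_mult N a"
  have cx: "continuous_on {0<..} x" and zx: "\<And>w. w \<le> 0 \<Longrightarrow> x w = 0"
    and ex: "\<And>w. w > 0 \<Longrightarrow> x w + (\<Sum>i=1..N. x (a i * w)) = 0"
    using x unfolding S_mult_def by auto
  have cy: "continuous_on {0<..} y" and zy: "\<And>w. w \<le> 0 \<Longrightarrow> y w = 0"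
    and ey: "\<And>w. w > 0 \<Longrightarrow> y w + (\<Sum>i=1..N. y (a i * w)) = 0"
    using y unfolding S_mult_def by auto
  have "continuous_on {0<..} (\<lambda>w. x w + y w)" using cx cy by (intro continuous_on_add)
  moreover have "(x w + y w) + (\<Sum>i=1..N. x (a i * w) + y (a i * w)) = 0" if "w > 0" for w
    using ex[OF that] ey[OF that] by (simp add: sum.distrib)
  ultimately show "x + y \<in> S_mult N a" unfolding S_mult_def plus_fun_def using zx zy by simp
next
  fix c x assume x: "x \<in> S_mult N a"
  have cx: "continuous_on {0<..} x" and zx: "\<And>w. w \<le> 0 \<Longrightarrow> x w = 0"
    and ex: "\<And>w. w > 0 \<Longrightarrow> x w + (\<Sum>i=1..N. x (a i * w)) = 0"
    using x unfolding S_mult_def by auto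
  have "continuous_on {0<..} (\<lambda>w. c * x w)" using cx by (intro continuous_on_mult continuous_on_const)
  moreover have "c * x w + (\<Sum>i=1..N. c * x (a i * w)) = 0" if "w > 0" for w
  proof -
    have "c * x w + (\<Sum>i=1..N. c * x (a i * w)) = c * (x w + (\<Sum>i=1..N. x (a i * w)))"
      by (simp add: sum_distrib_left algebra_simps)
    then show ?thesis using ex[OF that] by simp
  qed
  ultimately show "fscale c x \<in> S_mult N a" unfolding S_mult_def fscale_def using zx by simp
qed

theorem mainTheorem5:
  fixes N :: nat and b a :: "nat \<Rightarrow> real"
  assumes "N \<ge> 1"
  shows "(0 < b 1 \<and> strict_mono_on {1..N} b \<longrightarrow> inf_dim_fun_space (S_add N b))
       \<and> (1 < a 1 \<and> strict_mono_on {1..N} a \<longrightarrow> inf_dim_fun_space (S_mult N a))"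
proof (intro conjI impI)
  assume h: "0 < b 1 \<and> strict_mono_on {1..N} b"
  obtain g :: "nat \<Rightarrow> real \<Rightarrow> real" and c where g: "\<forall>k. g k \<in> S_add N b"
    "\<forall>k l. k \<noteq> l \<longrightarrow> g k (c l) = 0" "\<forall>k. g k (c k) \<noteq> 0"
    using family_add[OF assms] h by blast
  have "infinite (range g) \<and> \<not> module.dependent fscale (range g)"
    using g by (intro indep_family[of g c]) auto
  moreover have "range g \<subseteq> S_add N b" using g by auto
  ultimately show "inf_dim_fun_space (S_add N b)"
    unfolding inf_dim_fun_space_def using subspace_add by blast
next
  assume h: "1 < a 1 \<and> strict_mono_on {1..N} a"
  have a_ge: "a 1 \<le> a i" if "i \<in> {1..N}" for i
  proof (cases "i = 1")
    case False
    then show ?thesis using strict_mono_onD[of "{1..N}" a 1 i] h that by auto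
  qed simp
  have apos: "0 < a i" if "i \<in> {1..N}" for i using a_ge[OF that] h by linarith
  define b' where "b' i = ln (a i)" for i
  have b1: "0 < b' 1" unfolding b'_def using h by simp
  have sm: "strict_mono_on {1..N} b'"
  proof (rule strict_mono_onI)
    fix i j assume ij: "i \<in> {1..N}" "j \<in> {1..N}" "i < j"
    then have "a i < a j" using h strict_mono_onD by blast
    then show "b' i < b' j" unfolding b'_def using apos ij by simp
  qed
  obtain g :: "nat \<Rightarrow> real \<Rightarrow> real" and c where g: "\<forall>k. g k \<in> S_add N b'"
    "\<forall>k l. k \<noteq> l \<longrightarrow> g k (c l) = 0" "\<forall>k. g k (c k) \<noteq> 0"
    using family_add[OF assms b1 sm] by blast
  define f where "f k x = (if x > 0 then g k (ln x) else 0)" for k x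
  have fS: "f k \<in> S_mult N a" for k
  proof -
    have cg: "continuous_on UNIV (g k)" and eg: "\<And>w. g k w + (\<Sum>i=1..N. g k (w + b' i)) = 0"
      using g(1) unfolding S_add_def by auto
    have "continuous_on {0<..} (\<lambda>x. g k (ln x))"
      by (rule continuous_on_compose2[OF cg]) (auto intro!: continuous_intros)
    then have c1: "continuous_on {0<..} (f k)"
      by (rule continuous_on_cong[THEN iffD1, rotated 2]) (auto simp: f_def)
    have e1: "f k x + (\<Sum>i=1..N. f k (a i * x)) = 0" if "x > 0" for x
    proof -
      have "(\<Sum>i=1..N. f k (a i * x)) = (\<Sum>i=1..N. g k (ln x + b' i))"
      proof (rule sum.cong[OF refl])
        fix i assume i: "i \<in> {1..N}"
        then have "a i * x > 0" using apos that by simp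
        moreover have "ln (a i * x) = ln x + b' i" unfolding b'_def
          using apos[OF i] that by (simp add: ln_mult)
        ultimately show "f k (a i * x) = g k (ln x + b' i)" unfolding f_def by simp
      qed
      then show ?thesis using eg[of "ln x"] that unfolding f_def by simp
    qed
    show ?thesis unfolding S_mult_def using c1 e1 by (auto simp: f_def)
  qed
  have "infinite (range f) \<and> \<not> module.dependent fscale (range f)"
  proof (rule indep_family[of f "\<lambda>k. exp (c k)"])
    show "f k (exp (c l)) = 0" if "k \<noteq> l" for k l using g(2) that unfolding f_def by simp
    show "f k (exp (c k)) \<noteq> 0" for k using g(3) unfolding f_def by simp
  qed
  moreover have "range f \<subseteq> S_mult N a" using fS by auto
  ultimately show "inf_dim_fun_space (S_mult N a)"
    unfolding inf_dim_fun_space_def using subspace_mult by blast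
qed

end
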